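(* Let $d\in\{2,3\}$, let $k^1,\dots,k^d$ be $d$ linearly independent elements of $\mathbb{Z}^d_0$ and let $K=\{k^1,\dots,k^d\}\cup\{-k^1,\dots,-k^d\}$. For $k\in\mathbb{Z}^d_0$, $i\in\{1,\dots,d-1\}$, define the vector field on $\mathbb{T}^d\times\mathbb{S}^{d-1}$ \[ Y_{k,i}(x,v)=\begin{pmatrix}e_k(x)\gamma_k^i\\ (k\cdot v)\,e_{-k}(x)\,\Pi_v\gamma_k^i\end{pmatrix}\in T_x\mathbb{T}^d\times T_v\mathbb{S}^{d-1}. \] Then at each $(x,v)\in\mathbb{T}^d\times\mathbb{S}^{d-1}$, \[ \operatorname{Span}\{Y_{k,i}(x,v):k\in K,\ i=1,\dots,d-1\}=T_x\mathbb{T}^d\times T_v\mathbb{S}^{d-1}. \]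
   Context: $\mathbb{T}^d=[0,2\pi]^d$ periodic; $\mathbb{Z}^d_+=\{k: k_d>0\}\cup\{k: k_1>0,k_d=0\}$, $\mathbb{Z}^d_-=-\mathbb{Z}^d_+$, $\mathbb{Z}^d_0=\mathbb{Z}^d\setminus\{0\}$; $e_k(x)=\sin(k\cdot x)$ for $k\in\mathbb{Z}^d_+$ and $\cos(k\cdot x)$ for $k\in\mathbb{Z}^d_-$. For each $k\in\mathbb{Z}^d_0$, $\gamma_k$ is a $d\times(d-1)$ matrix with columns $\gamma_k^1,\dots,\gamma_k^{d-1}$, satisfying $\gamma_k^\top k=0$, $\gamma_k^\top\gamma_k=\mathrm{Id}$, $\gamma_{-k}=-\gamma_k$. For $v\in\mathbb{S}^{d-1}$, $\Pi_v=\mathrm{Id}-v\otimes v$ is the orthogonal projection onto $T_v\mathbb{S}^{d-1}=v^\perp$. (These $Y_{k,i}$ are the Lie brackets $[e_k\gamma_k^i,V]$ of the noise directions with the drift $V$ of the $(x,v)$ equations $\dot x=u(x)$, $\dot v=\Pi_v\nabla u(x)v$.) *)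

theory Defs
  imports "HOL-Analysis.Analysis"
begin

text \<open>Integer lattice points as int^'n; coordinates ordered by the linear order on 'n,
  so k_1 = k $ (Min UNIV) and k_d = k $ (Max UNIV).\<close>

definition rvec :: "int^'n \<Rightarrow> real^'n" where
  "rvec k = (\<chi> i. real_of_int (k $ i))"

definition Zplus :: "(int^('n::{finite,linorder})) set" where
  "Zplus = {k. k $ Max UNIV > 0}
         \<union> {k. k $ Min UNIV > 0 \<and> k $ Max UNIV = 0}
         \<union> {k. k $ Min UNIV = 0 \<and> k $ Max UNIV = 0 \<and>
               (\<exists>i. k $ i > 0 \<and> (\<forall>j<i. k $ j = 0))}"

definition Zminus :: "(int^('n::{finite,linorder})) set" where
  "Zminus = uminus ` Zplus"

definition Zzero :: "(int^'n::finite) set" where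
  "Zzero = UNIV - {0}"

definition ek :: "int^('n::{finite,linorder}) \<Rightarrow> real^('n::{finite,linorder}) \<Rightarrow> real" where
  "ek k x = (if k \<in> Zplus then sin (rvec k \<bullet> x) else cos (rvec k \<bullet> x))"

definition Proj :: "real^'n \<Rightarrow> real^'n \<Rightarrow> real^'n" where
  "Proj v w = w - (v \<bullet> w) *\<^sub>R v"

definition dimof :: "('a, 'n::finite) vec \<Rightarrow> nat" where
  "dimof k = CARD('n)"

text \<open>gamma k i is the i-th column (i = 1..d-1) of the matrix gamma_k.\<close>
definition admissible_gamma :: "(int^('n::{finite,linorder}) \<Rightarrow> nat \<Rightarrow> real^('n::{finite,linorder})) \<Rightarrow> bool" where
  "admissible_gamma \<gamma> \<longleftrightarrow>
     (\<forall>k\<in>Zzero. (\<forall>i\<in>{1..<dimof k}. \<gamma> k i \<bullet> rvec k = 0)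
        \<and> (\<forall>i\<in>{1..<dimof k}. \<forall>j\<in>{1..<dimof k}. \<gamma> k i \<bullet> \<gamma> k j = (if i = j then 1 else 0))
        \<and> (\<forall>i\<in>{1..<dimof k}. \<gamma> (-k) i = - \<gamma> k i))"

definition Yfield :: "(int^('n::{finite,linorder}) \<Rightarrow> nat \<Rightarrow> real^('n::{finite,linorder})) \<Rightarrow> int^('n::{finite,linorder}) \<Rightarrow> nat
    \<Rightarrow> real^('n::{finite,linorder}) \<Rightarrow> real^('n::{finite,linorder}) \<Rightarrow> (real^('n::{finite,linorder})) \<times> (real^('n::{finite,linorder}))" where
  "Yfield \<gamma> k i x v =
     (ek k x *\<^sub>R \<gamma> k i,
      ((rvec k \<bullet> v) * ek (-k) x) *\<^sub>R Proj v (\<gamma> k i))"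

end

theory Submission
  imports Defs
begin

lemma rvec_neg: "rvec (-k) = - rvec k" by (simp add: rvec_def vec_eq_iff)
lemma rvec_zero_iff: "rvec k = 0 \<longleftrightarrow> k = 0" by (simp add: rvec_def vec_eq_iff)

lemma gamma_span_UNIV:
  fixes \<gamma> :: "int^('n::{finite,linorder}) \<Rightarrow> nat \<Rightarrow> real^('n::{finite,linorder})"
  assumes adm: "admissible_gamma \<gamma>" and k: "k \<in> Zzero"
  shows "span (insert (rvec k) (\<gamma> k ` {1..<CARD('n)})) = UNIV"
proof -
  let ?G = "\<gamma> k ` {1..<CARD('n)}"
  have orth: "\<forall>i\<in>{1..<CARD('n)}. \<gamma> k i \<bullet> rvec k = 0"
    and on: "\<forall>i\<in>{1..<CARD('n)}. \<forall>j\<in>{1..<CARD('n)}. \<gamma> k i \<bullet> \<gamma> k j = (if i = j then 1 else 0)"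
    using adm k unfolding admissible_gamma_def dimof_def by auto
  have kne: "rvec k \<noteq> 0" using k by (simp add: Zzero_def rvec_zero_iff)
  have inj: "inj_on (\<gamma> k) {1..<CARD('n)}"
  proof (rule inj_onI)
    fix i j assume ij: "i \<in> {1..<CARD('n)}" "j \<in> {1..<CARD('n)}" "\<gamma> k i = \<gamma> k j"
    then have "\<gamma> k i \<bullet> \<gamma> k j = 1" using on by auto
    then show "i = j" using on ij by (metis zero_neq_one)
  qed
  have notin: "rvec k \<notin> ?G" using orth kne by auto
  have card: "card (insert (rvec k) ?G) = CARD('n)"
    using card_image[OF inj] notin by (simp add: card_insert_disjoint)
  have po: "pairwise orthogonal (insert (rvec k) ?G)"
    unfolding pairwise_def orthogonal_def using orth on by (auto simp: inner_commute)
  have z: "0 \<notin> insert (rvec k) ?G" using kne on by fastforce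
  have ind: "independent (insert (rvec k) ?G)"
    using pairwise_orthogonal_independent po z by blast
  have "UNIV \<subseteq> span (insert (rvec k) ?G)"
    by (rule card_ge_dim_independent[OF _ ind]) (use card in simp_all)
  then show ?thesis by auto
qed

lemma gamma_perp_span:
  fixes \<gamma> :: "int^('n::{finite,linorder}) \<Rightarrow> nat \<Rightarrow> real^('n::{finite,linorder})"
  assumes adm: "admissible_gamma \<gamma>" and k: "k \<in> Zzero" and g: "g \<bullet> rvec k = 0"
  shows "g \<in> span (\<gamma> k ` {1..<CARD('n)})"
proof -
  have orth: "\<forall>i\<in>{1..<CARD('n)}. \<gamma> k i \<bullet> rvec k = 0"
    using adm k unfolding admissible_gamma_def dimof_def by auto
  have kne: "rvec k \<noteq> 0" using k by (simp add: Zzero_def rvec_zero_iff)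
  have "g \<in> span (insert (rvec k) (\<gamma> k ` {1..<CARD('n)}))" using gamma_span_UNIV[OF adm k] by auto
  then obtain c where c: "g - c *\<^sub>R rvec k \<in> span (\<gamma> k ` {1..<CARD('n)})"
    unfolding span_insert by auto
  have "orthogonal (rvec k) (g - c *\<^sub>R rvec k)"
    by (rule orthogonal_to_span[OF c]) (use orth in \<open>auto simp: orthogonal_def inner_commute\<close>)
  then have "rvec k \<bullet> g - c * (rvec k \<bullet> rvec k) = 0"
    by (simp add: orthogonal_def inner_diff_right)
  then have "c * (rvec k \<bullet> rvec k) = 0" using g by (simp add: inner_commute)
  then have "c = 0" using kne by simp
  then show ?thesis using c by simp
qed

lemma Zplus_neg:
  fixes k :: "int^('n::{finite,linorder})"
  assumes "k \<noteq> 0"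
  shows "(-k \<in> Zplus) \<longleftrightarrow> \<not> (k \<in> Zplus)"
proof -
  define i0 where "i0 = Min {i. k $ i \<noteq> 0}"
  have ne: "{i. k $ i \<noteq> 0} \<noteq> {}" using assms by (auto simp: vec_eq_iff)
  have i0: "k $ i0 \<noteq> 0" unfolding i0_def using Min_in[OF _ ne] by auto
  have lt: "\<And>j. j < i0 \<Longrightarrow> k $ j = 0" unfolding i0_def using Min_le[of "{i. k $ i \<noteq> 0}"]
    by (metis (mono_tags) finite mem_Collect_eq not_le)
  have c1: "(\<exists>i. k $ i > 0 \<and> (\<forall>j<i. k $ j = 0)) \<longleftrightarrow> k $ i0 > 0"
  proof
    assume "\<exists>i. k $ i > 0 \<and> (\<forall>j<i. k $ j = 0)"
    then obtain i where i: "k $ i > 0" "\<forall>j<i. k $ j = 0" by blast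
    have "i = i0" using i i0 lt by (metis less_irrefl neq_iff)
    then show "k $ i0 > 0" using i by simp
  qed (use lt in blast)
  have c2: "(\<exists>i. (-k) $ i > 0 \<and> (\<forall>j<i. (-k) $ j = 0)) \<longleftrightarrow> k $ i0 < 0"
  proof
    assume "\<exists>i. (-k) $ i > 0 \<and> (\<forall>j<i. (-k) $ j = 0)"
    then obtain i where i: "k $ i < 0" "\<forall>j<i. k $ j = 0" by auto
    have "i = i0" using i i0 lt by (metis less_irrefl neq_iff)
    then show "k $ i0 < 0" using i by simp
  next
    assume "k $ i0 < 0" then show "\<exists>i. (-k) $ i > 0 \<and> (\<forall>j<i. (-k) $ j = 0)"
      using lt by (intro exI[of _ i0]) auto
  qed
  show ?thesis
    unfolding Zplus_def using c1 c2 i0 by auto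
qed

lemma ek_sq:
  fixes k :: "int^('n::{finite,linorder})"
  assumes "k \<noteq> 0"
  shows "(ek k x)^2 + (ek (-k) x)^2 = 1"
proof (cases "k \<in> Zplus")
  case True
  then have "-k \<notin> Zplus" using Zplus_neg[OF assms] by blast
  then show ?thesis using True by (simp add: ek_def rvec_neg)
next
  case False
  then have "-k \<in> Zplus" using Zplus_neg[OF assms] by blast
  then show ?thesis using False by (simp add: ek_def rvec_neg)
qed

lemma Proj_neg: "Proj v (- g) = - Proj v g" by (simp add: Proj_def)

lemma linear_Proj: "linear (Proj v)"
  by (rule linearI) (simp_all add: Proj_def inner_add_right algebra_simps)

theorem lemma5p3:
  fixes \<gamma> :: "int^('n::{finite,linorder}) \<Rightarrow> nat \<Rightarrow> real^('n::{finite,linorder})"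
    and kv :: "nat \<Rightarrow> int^('n::{finite,linorder})"
    and x v :: "real^('n::{finite,linorder})"
  assumes "CARD('n::{finite,linorder}) = 2 \<or> CARD('n::{finite,linorder}) = 3"
    and "admissible_gamma \<gamma>"
    and "\<forall>j\<in>{1..CARD('n::{finite,linorder})}. kv j \<in> Zzero"
    and "inj_on (\<lambda>j. rvec (kv j)) {1..CARD('n::{finite,linorder})}"
    and "independent ((\<lambda>j. rvec (kv j)) ` {1..CARD('n::{finite,linorder})})"
    and "norm v = 1"
  shows "span {Yfield \<gamma> k i x v | k i.
                k \<in> kv ` {1..CARD('n::{finite,linorder})} \<union> uminus ` kv ` {1..CARD('n::{finite,linorder})} \<and> i \<in> {1..<CARD('n::{finite,linorder})}}
         = UNIV \<times> {w. w \<bullet> v = 0}"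
proof -
  note card2 = assms(1) and adm = assms(2) and kz = assms(3) and inj = assms(4) and ind = assms(5)
  define I where "I = {1..CARD('n)}"
  define Is where "Is = {1..<CARD('n)}"
  define Ks where "Ks = kv ` I \<union> uminus ` kv ` I"
  define S where "S = {Yfield \<gamma> k i x v | k i. k \<in> Ks \<and> i \<in> Is}"
  have vv: "v \<bullet> v = 1" using assms(6) by (metis norm_eq_1)
  have KsZ: "k \<in> Zzero" if "k \<in> Ks" for k
    using that kz unfolding Ks_def I_def Zzero_def by auto
  have Ksneg: "-k \<in> Ks" if "k \<in> Ks" for k
    using that unfolding Ks_def by (auto simp: image_iff)
  have step1: "(\<gamma> k i, 0) \<in> span S \<and> (0, (rvec k \<bullet> v) *\<^sub>R Proj v (\<gamma> k i)) \<in> span S"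
    if k: "k \<in> Ks" and i: "i \<in> Is" for k i
  proof -
    have kZ: "k \<in> Zzero" using KsZ[OF k] .
    have gneg: "\<gamma> (-k) i = - \<gamma> k i"
      using adm kZ i unfolding admissible_gamma_def dimof_def Is_def by auto
    have k0: "k \<noteq> 0" using kZ by (simp add: Zzero_def)
    define a where "a = ek k x"
    define b where "b = ek (-k) x"
    have ab: "a^2 + b^2 = 1" unfolding a_def b_def by (rule ek_sq[OF k0])
    have Y1: "Yfield \<gamma> k i x v \<in> S" unfolding S_def using k i by blast
    have Y2: "Yfield \<gamma> (-k) i x v \<in> S" unfolding S_def using Ksneg[OF k] i by blast
    have e1: "Yfield \<gamma> k i x v = (a *\<^sub>R \<gamma> k i, ((rvec k \<bullet> v) * b) *\<^sub>R Proj v (\<gamma> k i))"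
      by (simp add: Yfield_def a_def b_def)
    have e2: "Yfield \<gamma> (-k) i x v = (- (b *\<^sub>R \<gamma> k i), ((rvec k \<bullet> v) * a) *\<^sub>R Proj v (\<gamma> k i))"
      by (simp add: Yfield_def a_def b_def gneg rvec_neg Proj_neg)
    have "a *\<^sub>R Yfield \<gamma> k i x v - b *\<^sub>R Yfield \<gamma> (-k) i x v = ((a^2 + b^2) *\<^sub>R \<gamma> k i, 0)"
      unfolding e1 e2 by (simp add: algebra_simps power2_eq_square)
    moreover have "a *\<^sub>R Yfield \<gamma> k i x v - b *\<^sub>R Yfield \<gamma> (-k) i x v \<in> span S"
      by (intro span_diff span_scale span_base Y1 Y2)
    moreover have "b *\<^sub>R Yfield \<gamma> k i x v + a *\<^sub>R Yfield \<gamma> (-k) i x v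
        = (0, (a^2 + b^2) *\<^sub>R ((rvec k \<bullet> v) *\<^sub>R Proj v (\<gamma> k i)))"
      unfolding e1 e2 by (simp add: algebra_simps power2_eq_square)
    moreover have "b *\<^sub>R Yfield \<gamma> k i x v + a *\<^sub>R Yfield \<gamma> (-k) i x v \<in> span S"
      by (intro span_add span_scale span_base Y1 Y2)
    ultimately show ?thesis using ab by simp
  qed
  define Gs where "Gs = {\<gamma> k i | k i. k \<in> kv ` I \<and> i \<in> Is}"
  have nge2: "CARD('n) \<ge> 2" using card2 by auto
  have spanG: "span Gs = UNIV"
  proof (rule ccontr)
    assume "span Gs \<noteq> UNIV"
    then have dlt: "dim Gs < DIM(real^('n::{finite,linorder}))" using dim_eq_full[of Gs] dim_subset_UNIV[of Gs] by force
    then obtain w :: "real^('n::{finite,linorder})" where w0: "w \<noteq> 0" and wo: "\<And>y. y \<in> span Gs \<Longrightarrow> orthogonal w y"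
      using orthogonal_to_subspace_exists[OF dlt] by blast
    have par: "\<exists>c. w = c *\<^sub>R rvec (kv j)" if j: "j \<in> I" for j
    proof -
      let ?r = "rvec (kv j)"
      have kZ: "kv j \<in> Zzero" using kz j unfolding I_def by auto
      have rne: "?r \<noteq> 0" using kZ by (simp add: Zzero_def rvec_zero_iff)
      define c where "c = (w \<bullet> ?r) / (?r \<bullet> ?r)"
      define u where "u = w - c *\<^sub>R ?r"
      have ur: "u \<bullet> ?r = 0" unfolding u_def c_def using rne by (simp add: inner_diff_left)
      have "u \<in> span (\<gamma> (kv j) ` Is)" unfolding Is_def by (rule gamma_perp_span[OF adm kZ ur])
      moreover have "span (\<gamma> (kv j) ` Is) \<subseteq> span Gs"
        by (rule span_mono) (use j in \<open>auto simp: Gs_def\<close>)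
      ultimately have "orthogonal w u" using wo by blast
      then have "u \<bullet> u = 0" using ur unfolding u_def orthogonal_def
        by (simp add: inner_diff_left inner_diff_right inner_commute)
      then have "u = 0" by simp
      then show ?thesis unfolding u_def by (intro exI[of _ c]) simp
    qed
    have j1: "1 \<in> I" and j2: "2 \<in> I" using nge2 unfolding I_def by auto
    obtain c1 where c1: "w = c1 *\<^sub>R rvec (kv 1)" using par[OF j1] by blast
    obtain c2 where c2: "w = c2 *\<^sub>R rvec (kv 2)" using par[OF j2] by blast
    have c10: "c1 \<noteq> 0" using c1 w0 by auto
    have neq: "rvec (kv 1) \<noteq> rvec (kv 2)" using inj j1 j2 unfolding I_def inj_on_def by fastforce
    have "rvec (kv 1) = (c2 / c1) *\<^sub>R rvec (kv 2)" using c1 c2 c10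
      by (metis (no_types, lifting) divide_inverse_commute scaleR_scaleR inverse_eq_divide
          divide_self_if scaleR_one times_divide_eq_left)
    moreover have "rvec (kv 2) \<in> (\<lambda>j. rvec (kv j)) ` I - {rvec (kv 1)}" using j2 neq by auto
    ultimately have "rvec (kv 1) \<in> span ((\<lambda>j. rvec (kv j)) ` I - {rvec (kv 1)})"
      by (metis span_base span_scale)
    then have "dependent ((\<lambda>j. rvec (kv j)) ` I)" unfolding dependent_def using j1 by blast
    then show False using ind unfolding I_def by blast
  qed
  have part1: "(w, 0) \<in> span S" for w :: "real^('n::{finite,linorder})"
  proof -
    let ?f = "\<lambda>g::real^('n::{finite,linorder}). (g, 0::real^('n::{finite,linorder}))"
    have lf: "linear ?f" by (rule linearI) simp_all
    have "?f ` Gs \<subseteq> span S"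
      unfolding Gs_def Ks_def using step1 unfolding Ks_def by blast
    then have "span (?f ` Gs) \<subseteq> span S" by (metis span_minimal subspace_span)
    moreover have "?f w \<in> span (?f ` Gs)" unfolding span_linear_image[OF lf] spanG by simp
    ultimately show ?thesis by blast
  qed
  obtain j where j: "j \<in> I" and jv: "rvec (kv j) \<bullet> v \<noteq> 0"
  proof (rule ccontr)
    assume "\<not> thesis"
    then have allz: "\<forall>j\<in>I. rvec (kv j) \<bullet> v = 0" using that by blast
    have cardK: "card ((\<lambda>j. rvec (kv j)) ` I) = CARD('n)"
      using card_image[OF inj] unfolding I_def by simp
    have "UNIV \<subseteq> span ((\<lambda>j. rvec (kv j)) ` I)"
      by (rule card_ge_dim_independent) (use ind cardK in \<open>simp_all add: I_def\<close>)
    then have "v \<in> span ((\<lambda>j. rvec (kv j)) ` I)" by blast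
    then have "orthogonal v v"
      by (rule orthogonal_to_span) (use allz in \<open>auto simp: orthogonal_def inner_commute\<close>)
    then show False using vv by (simp add: orthogonal_def)
  qed
  have part2: "(0, u) \<in> span S" if u: "u \<bullet> v = 0" for u
  proof -
    let ?k = "kv j"
    let ?r = "rvec ?k"
    define t where "t = ?r \<bullet> v"
    have t0: "t \<noteq> 0" using jv t_def by simp
    have kZ: "?k \<in> Zzero" using kz j unfolding I_def by auto
    have kK: "?k \<in> Ks" using j unfolding Ks_def by auto
    define sc where "sc = - (u \<bullet> ?r) / t"
    define g where "g = u + sc *\<^sub>R v"
    have "g \<bullet> ?r = u \<bullet> ?r + sc * t" unfolding g_def t_def by (simp add: inner_add_left inner_add_right inner_commute)
    then have gr: "g \<bullet> ?r = 0" unfolding sc_def using t0 by simp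
    have gs: "g \<in> span (\<gamma> ?k ` Is)" unfolding Is_def by (rule gamma_perp_span[OF adm kZ gr])
    let ?h = "\<lambda>g. (0::real^('n::{finite,linorder}), t *\<^sub>R Proj v g)"
    have lh: "linear ?h"
      by (rule linearI) (simp_all add: linear_add[OF linear_Proj] linear_scale[OF linear_Proj] algebra_simps)
    have "?h ` (\<gamma> ?k ` Is) \<subseteq> span S" using step1[OF kK] unfolding t_def by auto
    then have "span (?h ` (\<gamma> ?k ` Is)) \<subseteq> span S" by (metis span_minimal subspace_span)
    moreover have "?h g \<in> span (?h ` (\<gamma> ?k ` Is))" unfolding span_linear_image[OF lh] using gs by blast
    ultimately have "?h g \<in> span S" by blast
    moreover have "Proj v g = u" unfolding g_def Proj_def using u vv
      by (simp add: inner_add_right inner_commute)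
    ultimately have "(0, t *\<^sub>R u) \<in> span S" by simp
    then have "(1/t) *\<^sub>R (0, t *\<^sub>R u) \<in> span S" by (rule span_scale)
    then show ?thesis using t0 by simp
  qed
  have sub: "subspace (UNIV \<times> {w::real^('n::{finite,linorder}). w \<bullet> v = 0})"
    unfolding subspace_def by (auto simp: inner_add_left zero_prod_def)
  have "S \<subseteq> UNIV \<times> {w. w \<bullet> v = 0}"
    unfolding S_def Yfield_def Proj_def using vv
    by (auto simp: inner_diff_left inner_diff_right inner_commute)
  then have "span S \<subseteq> UNIV \<times> {w. w \<bullet> v = 0}" using sub by (rule span_minimal)
  moreover have "UNIV \<times> {w. w \<bullet> v = 0} \<subseteq> span S"
  proof clarify
    fix w u :: "real^('n::{finite,linorder})" assume "u \<bullet> v = 0"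
    then have "(w, 0) + (0, u) \<in> span S" using part1 part2 by (intro span_add) auto
    then show "(w, u) \<in> span S" by simp
  qed
  ultimately show ?thesis unfolding S_def Ks_def I_def Is_def by blast
qed

end
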